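(* Let $K$ be a field, $S=K[x_1,\ldots,x_n]$, $I\subset S$ a monomial ideal with $I\ne S$ and $G(I)=\{x^{a_1},\ldots,x^{a_m}\}$. Let $T$ be the polynomial ring over $K$ in variables $x_{l1},\ldots,x_{lm_l}$, $l=1,\ldots,n$, $T_l=K[x_{l1},\ldots,x_{lm_l}]$, and let $\mathfrak{n}$ be the graded maximal ideal of $T$. For $l=1,\ldots,n$, $j=1,\ldots,m$ let $L_{l,a_j(l)}\subset T_l$ be monomial ideals with $L_{l,a_j(l)}\subset L_{l,a_k(l)}$ whenever $a_j(l)\ge a_k(l)$, each having an $a_j(l)$-linear resolution, and let $L_j=\prod_{l=1}^nL_{l,a_j(l)}\subset T$. Let $\mathbb{F}^*$ be the complex of $L_1,\ldots,L_m$ induced by $I$ with differential $\partial^*$. Then $\partial^*(F_i^* )\subset\mathfrak{n}F^*_{i-1}$ for all $i>0$.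
   Context: For $a\in\mathbb{N}^n$, $x^a=x_1^{a(1)}\cdots x_n^{a(n)}$; $G(I)$ is the minimal monomial generating set. An ideal has a $d$-linear resolution if it is generated in degree $d$ and its minimal graded free resolution is linear. Let $0\to F_p\to\cdots\to F_1\to F_0\to S/I\to 0$ be the $\mathbb{Z}^n$-graded minimal free resolution of $S/I$ with differential $\partial$, where $F_0=S$ with basis $f_{01}$ of degree $0$, and $F_i=\bigoplus_{j=1}^{\beta_i}Sf_{ij}$ with $f_{ij}$ homogeneous of multidegree $a_{ij}\in\mathbb{N}^n$; here $\beta_1=m$, $a_{1j}=a_j$, $\partial(f_{1j})=x^{a_j}f_{01}$. Write $\partial(f_{ij})=\sum_k\lambda^{(i)}_{kj}x^{a_{ij}-a_{i-1,k}}f_{i-1,k}$ with $\lambda^{(i)}_{kj}\in K$, where $\lambda^{(i)}_{kj}=0$ whenever $a_{ij}-a_{i-1,k}\notin\mathbb{N}^n$; $\lambda^{(i)}=(\lambda^{(i)}_{kj})$. The complex $\mathbb{F}^*$ has $F^*_0=T$, $F^*_i=\bigoplus_{j=1}^{\beta_i}L_{ij}$ for $1\le i\le p$, where $L_{1j}=L_j$ and for $i\ge2$, $L_{ij}=\bigcap_{k:\lambda^{(i)}_{kj}\ne0}L_{i-1,k}$; $\partial^*:F^*_i\to F^*_{i-1}$ sends a column vector $u$ with $u_j\in L_{ij}$ to $\lambda^{(i)}u$. *)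

theory Defs
  imports Main "HOL-Library.Poly_Mapping"
begin

type_synonym ('v,'k) mpoly = "('v \<Rightarrow>\<^sub>0 nat) \<Rightarrow>\<^sub>0 'k"

definition xmon :: "('v \<Rightarrow>\<^sub>0 nat) \<Rightarrow> ('v,'k::comm_ring_1) mpoly" where
  "xmon a = Poly_Mapping.single a 1"

definition cnst :: "'k::comm_ring_1 \<Rightarrow> ('v,'k) mpoly" where
  "cnst c = Poly_Mapping.single 0 c"

definition var :: "'v \<Rightarrow> ('v,'k::comm_ring_1) mpoly" where
  "var v = xmon (Poly_Mapping.single v 1)"

text \<open>componentwise divisibility of exponent vectors (x^b divides x^a)\<close>
definition mdvd :: "('v \<Rightarrow>\<^sub>0 nat) \<Rightarrow> ('v \<Rightarrow>\<^sub>0 nat) \<Rightarrow> bool" where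
  "mdvd b a \<longleftrightarrow> (\<forall>v. Poly_Mapping.lookup b v \<le> Poly_Mapping.lookup a v)"

text \<open>polynomial ring in the variables V (as a subset of all polynomials)\<close>
definition polyring :: "'v set \<Rightarrow> ('v,'k::comm_ring_1) mpoly set" where
  "polyring V = {f. \<forall>a\<in>Poly_Mapping.keys f. Poly_Mapping.keys a \<subseteq> V}"

definition ideal_gen :: "('v,'k::comm_ring_1) mpoly set \<Rightarrow> ('v,'k) mpoly set \<Rightarrow> ('v,'k) mpoly set" where
  "ideal_gen R G = {\<Sum>s<(N::nat). c s * g s | N c g. \<forall>s<N. c s \<in> R \<and> g s \<in> G}"

definition is_ideal :: "('v,'k::comm_ring_1) mpoly set \<Rightarrow> ('v,'k) mpoly set \<Rightarrow> bool" where
  "is_ideal R I \<longleftrightarrow> I \<subseteq> R \<and> 0 \<in> I \<and> (\<forall>f\<in>I. \<forall>g\<in>I. f + g \<in> I)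
      \<and> (\<forall>r\<in>R. \<forall>f\<in>I. r * f \<in> I)"

definition monomial_ideal :: "('v,'k::comm_ring_1) mpoly set \<Rightarrow> ('v,'k) mpoly set \<Rightarrow> bool" where
  "monomial_ideal R I \<longleftrightarrow> is_ideal R I \<and> I = ideal_gen R {u \<in> I. \<exists>a. u = xmon a}"

definition mingens :: "('v,'k::comm_ring_1) mpoly set \<Rightarrow> ('v,'k) mpoly set" where
  "mingens I = {xmon a | a. xmon a \<in> I \<and> \<not> (\<exists>b. xmon b \<in> I \<and> b \<noteq> a \<and> mdvd b a)}"

text \<open>homogeneous of (standard) degree d; the zero polynomial is homogeneous of every degree\<close>
definition homog :: "nat \<Rightarrow> ('v,'k::comm_ring_1) mpoly \<Rightarrow> bool" where
  "homog d f \<longleftrightarrow> (\<forall>a\<in>Poly_Mapping.keys f. (\<Sum>v\<in>Poly_Mapping.keys a. Poly_Mapping.lookup a v) = d)"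

text \<open>column vectors of length b with entries in the set R (modelled as nat-indexed, zero beyond b)\<close>
definition vecs :: "'a::zero set \<Rightarrow> nat \<Rightarrow> (nat \<Rightarrow> 'a) set" where
  "vecs R b = {u. (\<forall>j<b. u j \<in> R) \<and> (\<forall>j\<ge>b. u j = 0)}"

definition mat_app :: "nat \<Rightarrow> nat \<Rightarrow> (nat \<Rightarrow> nat \<Rightarrow> 'a::comm_ring_1) \<Rightarrow> (nat \<Rightarrow> 'a) \<Rightarrow> nat \<Rightarrow> 'a" where
  "mat_app r c M u = (\<lambda>k. if k < r then (\<Sum>j<c. M k j * u j) else 0)"

definition module_gen :: "('v,'k::comm_ring_1) mpoly set \<Rightarrow> (nat \<Rightarrow> ('v,'k) mpoly) set
     \<Rightarrow> (nat \<Rightarrow> ('v,'k) mpoly) set" where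
  "module_gen R G = {(\<lambda>k. \<Sum>s<(N::nat). c s * w s k) | N c w. \<forall>s<N. c s \<in> R \<and> w s \<in> G}"

text \<open>The ideal L of the (standard graded) polynomial ring R = polyring V has a d-linear resolution:
  there is a graded free resolution 0 <- R/L <- R <- R^{b 1} <- R^{b 2} <- ... of R/L whose
  first map is given by generators of L homogeneous of degree d and all further maps by matrices
  of linear forms. (Such a resolution is automatically minimal, so this says precisely that L is
  generated in degree d and its minimal graded free resolution is linear.)\<close>
definition has_linear_resolution :: "'v set \<Rightarrow> ('v,'k::comm_ring_1) mpoly set \<Rightarrow> nat \<Rightarrow> bool" where
  "has_linear_resolution V L d \<longleftrightarrow>
    (\<exists>(b::nat \<Rightarrow> nat) (M::nat \<Rightarrow> nat \<Rightarrow> nat \<Rightarrow> ('v,'k) mpoly).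
       b 0 = 1 \<and> (\<exists>p. \<forall>i>p. b i = 0) \<and>
       (\<forall>i k j. M i k j \<in> polyring V) \<and>
       (\<forall>j. homog d (M 1 0 j)) \<and>
       (\<forall>i\<ge>2. \<forall>k j. homog 1 (M i k j)) \<and>
       (\<lambda>u. mat_app 1 (b 1) (M 1) u 0) ` vecs (polyring V) (b 1) = L \<and>
       (\<forall>i\<ge>1. {u \<in> vecs (polyring V) (b i). mat_app (b (i - 1)) (b i) (M i) u = (\<lambda>_. 0)}
               = mat_app (b i) (b (i + 1)) (M (i + 1)) ` vecs (polyring V) (b (i + 1))))"

text \<open>Matrix of the i-th differential of a Z^n-graded free resolution with basis degrees a,
  scalars lam: entry (k,j) is lam i k j * x^(a i j - a (i-1) k).\<close>
definition res_mat :: "(nat \<Rightarrow> nat \<Rightarrow> ('v \<Rightarrow>\<^sub>0 nat)) \<Rightarrow> (nat \<Rightarrow> nat \<Rightarrow> nat \<Rightarrow> 'k::comm_ring_1)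
     \<Rightarrow> nat \<Rightarrow> nat \<Rightarrow> nat \<Rightarrow> ('v,'k) mpoly" where
  "res_mat a lam i k j = cnst (lam i k j) * xmon (a i j - a (i - 1) k)"

text \<open>(beta, a, lam, p) is a Z^n-graded minimal free resolution of S/I, S = K[x_v | v :: 'v]:
  F_0 = S with basis of degree 0, F_i = S^(beta i) with basis of degrees a i j, differentials
  given by res_mat, exact with cokernel of the first map S/I, of length p, and minimal.\<close>
definition is_min_graded_res ::
  "('v::finite,'k::field) mpoly set \<Rightarrow> (nat \<Rightarrow> nat) \<Rightarrow> (nat \<Rightarrow> nat \<Rightarrow> ('v \<Rightarrow>\<^sub>0 nat))
     \<Rightarrow> (nat \<Rightarrow> nat \<Rightarrow> nat \<Rightarrow> 'k) \<Rightarrow> nat \<Rightarrow> bool" where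
  "is_min_graded_res I beta a lam p \<longleftrightarrow>
     beta 0 = 1 \<and> a 0 0 = 0 \<and> (\<forall>i>p. beta i = 0) \<and>
     (\<forall>i k j. lam i k j \<noteq> 0 \<longrightarrow> mdvd (a (i - 1) k) (a i j)) \<and>
     (\<lambda>u. mat_app 1 (beta 1) (res_mat a lam 1) u 0) ` vecs UNIV (beta 1) = I \<and>
     (\<forall>i\<ge>1. {u \<in> vecs UNIV (beta i). mat_app (beta (i - 1)) (beta i) (res_mat a lam i) u = (\<lambda>_. 0)}
             = mat_app (beta i) (beta (i + 1)) (res_mat a lam (i + 1)) ` vecs UNIV (beta (i + 1))) \<and>
     (\<forall>i\<ge>1. \<forall>k<beta (i - 1). \<forall>j<beta i.
          res_mat a lam i k j \<in> ideal_gen UNIV (range var))"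

text \<open>Variables of T: x_{l r}, l :: 'v, r < mT l.\<close>
definition Tvars :: "('v \<Rightarrow> nat) \<Rightarrow> ('v \<times> nat) set" where
  "Tvars mT = {(l, r). r < mT l}"

definition Tlvars :: "('v \<Rightarrow> nat) \<Rightarrow> 'v \<Rightarrow> ('v \<times> nat) set" where
  "Tlvars mT l = {(l, r) | r. r < mT l}"

text \<open>The ideals L_{ij} of the complex F^*: L_{0 1} = T, L_{1j} = L_j, and for i \<ge> 2
  L_{ij} = intersection of the L_{i-1,k} with lam i k j \<noteq> 0.\<close>
primrec Lstar :: "('w,'k::comm_ring_1) mpoly set \<Rightarrow> (nat \<Rightarrow> ('w,'k) mpoly set) \<Rightarrow> (nat \<Rightarrow> nat)
     \<Rightarrow> (nat \<Rightarrow> nat \<Rightarrow> nat \<Rightarrow> 'k) \<Rightarrow> nat \<Rightarrow> nat \<Rightarrow> ('w,'k) mpoly set" where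
  "Lstar T Lj beta lam 0 j = T"
| "Lstar T Lj beta lam (Suc i) j =
     (if i = 0 then Lj j
      else T \<inter> \<Inter> {Lstar T Lj beta lam i k | k. k < beta i \<and> lam (Suc i) k j \<noteq> 0})"

definition Fstar :: "('w,'k::comm_ring_1) mpoly set \<Rightarrow> (nat \<Rightarrow> ('w,'k) mpoly set) \<Rightarrow> (nat \<Rightarrow> nat)
     \<Rightarrow> (nat \<Rightarrow> nat \<Rightarrow> nat \<Rightarrow> 'k) \<Rightarrow> nat \<Rightarrow> (nat \<Rightarrow> ('w,'k) mpoly) set" where
  "Fstar T Lj beta lam i = {u. (\<forall>j<beta i. u j \<in> Lstar T Lj beta lam i j) \<and> (\<forall>j\<ge>beta i. u j = 0)}"

definition dstar :: "(nat \<Rightarrow> nat) \<Rightarrow> (nat \<Rightarrow> nat \<Rightarrow> nat \<Rightarrow> 'k::comm_ring_1) \<Rightarrow> nat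
     \<Rightarrow> (nat \<Rightarrow> ('w,'k) mpoly) \<Rightarrow> nat \<Rightarrow> ('w,'k) mpoly" where
  "dstar beta lam i u = mat_app (beta (i - 1)) (beta i) (\<lambda>k j. cnst (lam i k j)) u"

end

theory Submission
  imports Defs
begin


lemma pm_nat_add_eq_0: "(l::'a \<Rightarrow>\<^sub>0 nat) + q = 0 \<longleftrightarrow> l = 0 \<and> q = 0"
  by (auto simp: poly_mapping_eq_iff lookup_add fun_eq_iff)

lemma ct_mult: "Poly_Mapping.lookup ((p::('v \<Rightarrow>\<^sub>0 nat) \<Rightarrow>\<^sub>0 'k::comm_ring_1) * q) 0
   = Poly_Mapping.lookup p 0 * Poly_Mapping.lookup q 0"
proof -
  have "\<And>l. (\<Sum>qq. Poly_Mapping.lookup q qq when 0 = l + qq) = (Poly_Mapping.lookup q 0 when l = 0)"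
  proof -
    fix l :: "'v \<Rightarrow>\<^sub>0 nat"
    have "(\<lambda>qq. Poly_Mapping.lookup q qq when 0 = l + qq) = (\<lambda>qq. (Poly_Mapping.lookup q 0 when l = 0) when qq = 0)"
      by (auto simp: fun_eq_iff when_def pm_nat_add_eq_0 dest: sym)
    then show "?thesis l" by (simp only:) simp
  qed
  then show ?thesis by (simp add: lookup_mult mult_when)
qed

lemma pm_sum_single: "p = (\<Sum>d\<in>Poly_Mapping.keys p. Poly_Mapping.single d (Poly_Mapping.lookup p d))"
  by (rule poly_mapping_eqI) (auto simp: lookup_sum lookup_single when_def in_keys_iff)

lemma lookup_single_mult: "Poly_Mapping.lookup (Poly_Mapping.single (c::'v \<Rightarrow>\<^sub>0 nat) (a::'k::comm_ring_1) * p) (c + e)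
   = a * Poly_Mapping.lookup p e"
proof -
  have "Poly_Mapping.single c a * p = (\<Sum>d\<in>Poly_Mapping.keys p. Poly_Mapping.single (c + d) (a * Poly_Mapping.lookup p d))"
    by (subst pm_sum_single[of p]) (simp add: sum_distrib_left mult_single)
  then show ?thesis
    by (auto simp: lookup_sum lookup_single when_def in_keys_iff)
qed

lemma xmon_add: "xmon (a + b) = (xmon a * xmon b :: ('v,'k::comm_ring_1) mpoly)"
  by (simp add: xmon_def mult_single)

lemma xmon_zero: "xmon 0 = (1 :: ('v,'k::comm_ring_1) mpoly)"
  by (simp add: xmon_def)

lemma keys_xmon[simp]: "Poly_Mapping.keys (xmon a :: ('v,'k::comm_ring_1) mpoly) = {a}"
  by (simp add: xmon_def)

lemma xmon_cancel: "xmon c * p = 0 \<Longrightarrow> (p :: ('v,'k::comm_ring_1) mpoly) = 0"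
proof (rule poly_mapping_eqI)
  fix e assume "xmon c * p = 0"
  then have "Poly_Mapping.lookup (xmon c * p) (c + e) = 0" by simp
  then show "Poly_Mapping.lookup p e = Poly_Mapping.lookup 0 e"
    by (simp add: xmon_def lookup_single_mult)
qed

lemma ct_xmon: "c \<noteq> 0 \<Longrightarrow> Poly_Mapping.lookup (xmon c :: ('v,'k::comm_ring_1) mpoly) 0 = 0"
  by (simp add: xmon_def lookup_single)

lemma ct_cnst[simp]: "Poly_Mapping.lookup (cnst a :: ('v,'k::comm_ring_1) mpoly) 0 = a"
  by (simp add: cnst_def)

lemma ct_var: "Poly_Mapping.lookup (var v :: ('v,'k::comm_ring_1) mpoly) 0 = 0"
  unfolding var_def by (rule ct_xmon) (metis lookup_single_eq lookup_zero one_neq_zero)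

lemma ct_maxideal: "p \<in> ideal_gen UNIV (range var) \<Longrightarrow> Poly_Mapping.lookup (p :: ('v,'k::comm_ring_1) mpoly) 0 = 0"
proof -
  assume "p \<in> ideal_gen UNIV (range var)"
  then obtain N c g where "p = (\<Sum>s<(N::nat). c s * g s)" "\<forall>s<N. g s \<in> range var"
    by (auto simp: ideal_gen_def)
  then show ?thesis by (auto simp: lookup_sum ct_mult ct_var intro!: sum.neutral)
qed

lemma cnst_mult: "cnst a * cnst b = (cnst (a * b) :: ('v,'k::comm_ring_1) mpoly)"
  by (simp add: cnst_def mult_single)

lemma single_cnst_xmon: "Poly_Mapping.single d b = (cnst b * xmon d :: ('v,'k::comm_ring_1) mpoly)"
  by (simp add: cnst_def xmon_def mult_single)

lemma xmon_polyring: "xmon t \<in> polyring V \<longleftrightarrow> Poly_Mapping.keys t \<subseteq> V"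
  by (simp add: polyring_def)

lemma cnst_polyring: "cnst c \<in> polyring V"
  by (simp add: polyring_def cnst_def)

lemma one_polyring: "1 \<in> polyring V"
  using xmon_polyring[of 0 V] by (simp add: xmon_zero)

lemma zero_polyring: "0 \<in> polyring V"
  by (simp add: polyring_def)

lemma var_polyring: "v \<in> V \<Longrightarrow> var v \<in> polyring V"
  by (simp add: var_def xmon_polyring)

lemma keys_diff_sub: "Poly_Mapping.keys ((d::'a \<Rightarrow>\<^sub>0 nat) - e) \<subseteq> Poly_Mapping.keys d"
  by (auto simp: in_keys_iff lookup_minus)

lemma keys_add_sub: "Poly_Mapping.keys ((d::'a \<Rightarrow>\<^sub>0 nat) + e) = Poly_Mapping.keys d \<union> Poly_Mapping.keys e"
  by (auto simp: in_keys_iff lookup_add)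

lemma M1:
  assumes mon: "monomial_ideal (polyring V) J" and f: "f \<in> J" and d: "d \<in> Poly_Mapping.keys f"
  shows "xmon d \<in> J"
proof -
  have id: "is_ideal (polyring V) J" using mon by (simp add: monomial_ideal_def)
  have "f \<in> ideal_gen (polyring V) {u \<in> J. \<exists>a. u = xmon a}"
    using mon f by (simp add: monomial_ideal_def)
  then obtain N c g where fe: "f = (\<Sum>s<(N::nat). c s * g s)" and cg: "\<forall>s<N. c s \<in> polyring V \<and> g s \<in> {u \<in> J. \<exists>a. u = xmon a}"
    by (auto simp: ideal_gen_def)
  from d fe keys_sum[of "\<lambda>s. c s * g s" "{..<N}"] obtain s where s: "s < N" "d \<in> Poly_Mapping.keys (c s * g s)" by blast
  from cg s obtain e where ge: "g s = xmon e" "xmon e \<in> J" by auto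
  from s(2) keys_mult[of "c s" "g s"] obtain t where t: "t \<in> Poly_Mapping.keys (c s)" "d = t + e" by (auto simp: ge(1))
  have "c s \<in> polyring V" using cg s by blast
  then have "xmon t \<in> polyring V" using t by (simp add: polyring_def xmon_polyring)
  then have "xmon t * xmon e \<in> J" using id ge(2) unfolding is_ideal_def by blast
  then show ?thesis by (simp add: t xmon_add)
qed

lemma ideal_sub: "monomial_ideal R J \<Longrightarrow> J \<subseteq> R"
  by (simp add: monomial_ideal_def is_ideal_def)

definition degm :: "('a \<Rightarrow>\<^sub>0 nat) \<Rightarrow> nat" where
  "degm a = (\<Sum>v\<in>Poly_Mapping.keys a. Poly_Mapping.lookup a v)"

lemma degm_mono: assumes "mdvd t e" shows "degm t \<le> degm e"
proof -
  have sub: "Poly_Mapping.keys t \<subseteq> Poly_Mapping.keys e"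
  proof
    fix x assume "x \<in> Poly_Mapping.keys t"
    then have "0 < Poly_Mapping.lookup t x" by (simp add: in_keys_iff)
    also have "\<dots> \<le> Poly_Mapping.lookup e x" using assms by (simp add: mdvd_def)
    finally show "x \<in> Poly_Mapping.keys e" by (simp add: in_keys_iff)
  qed
  have "degm t = (\<Sum>v\<in>Poly_Mapping.keys e. Poly_Mapping.lookup t v)"
    unfolding degm_def by (rule sum.mono_neutral_left) (auto simp: sub in_keys_iff)
  also have "\<dots> \<le> degm e" unfolding degm_def
    by (rule sum_mono) (use assms in \<open>auto simp: mdvd_def\<close>)
  finally show ?thesis .
qed

lemma mdvd_antisym: "mdvd t e \<Longrightarrow> mdvd e t \<Longrightarrow> t = e"
  unfolding mdvd_def by (rule poly_mapping_eqI) (meson antisym)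

lemma M2:
  fixes J :: "('v,'k::comm_ring_1) mpoly set"
  assumes hlr: "has_linear_resolution V J d" and mon: "monomial_ideal (polyring V) J"
    and e: "xmon e \<in> J"
  shows "\<exists>t. mdvd t e \<and> degm t = d \<and> xmon t \<in> J"
proof -
  obtain b :: "nat \<Rightarrow> nat" and M :: "nat \<Rightarrow> nat \<Rightarrow> nat \<Rightarrow> ('v,'k) mpoly" where
    hom: "\<forall>j. homog d (M 1 0 j)" and
    img: "(\<lambda>u. mat_app 1 (b 1) (M 1) u 0) ` vecs (polyring V) (b 1) = J"
    using hlr unfolding has_linear_resolution_def by (elim exE conjE) simp
  from e have "xmon e \<in> (\<lambda>u. mat_app 1 (b 1) (M 1) u 0) ` vecs (polyring V) (b 1)" by (simp only: img)
  then obtain u where u: "u \<in> vecs (polyring V) (b 1)" "xmon e = mat_app 1 (b 1) (M 1) u 0" by (rule imageE) simp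
  then have xe: "xmon e = (\<Sum>j<b 1. M 1 0 j * u j)" by (simp add: mat_app_def)
  have "e \<in> Poly_Mapping.keys (xmon e :: ('v,'k) mpoly)" by simp
  then have "e \<in> Poly_Mapping.keys (\<Sum>j<b 1. M 1 0 j * u j)" by (simp only: xe)
  with keys_sum[of "\<lambda>j. M 1 0 j * u j" "{..<b 1}"] obtain j where j: "j < b 1" "e \<in> Poly_Mapping.keys (M 1 0 j * u j)" by blast
  from j(2) keys_mult[of "M 1 0 j" "u j"] obtain t s where ts: "t \<in> Poly_Mapping.keys (M 1 0 j)" "e = t + s" by blast
  define ev where "ev = (\<lambda>k. if k = j then (1::('v,'k) mpoly) else 0)"
  have "ev \<in> vecs (polyring V) (b 1)" using j by (auto simp: vecs_def ev_def one_polyring zero_polyring)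
  then have "mat_app 1 (b 1) (M 1) ev 0 \<in> J" using img by blast
  moreover have "mat_app 1 (b 1) (M 1) ev 0 = M 1 0 j"
  proof -
    have "\<And>k. M 1 0 k * ev k = (if k = j then M 1 0 k else 0)" by (simp add: ev_def)
    then show ?thesis using j by (simp add: mat_app_def)
  qed
  ultimately have "M 1 0 j \<in> J" by simp
  then have "xmon t \<in> J" using M1[OF mon] ts by blast
  moreover have "degm t = d" using hom ts by (auto simp: homog_def degm_def)
  moreover have "mdvd t e" using ts by (simp add: mdvd_def lookup_add)
  ultimately show ?thesis by blast
qed



lemma mat_app_diff: "mat_app r c M (\<lambda>k. u k - v k) = (\<lambda>k. mat_app r c M u k - mat_app r c M v k)"
  by (simp add: mat_app_def fun_eq_iff right_diff_distrib sum_subtractf)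

lemma mat_app_smult: "mat_app r c M (\<lambda>k. s * u k) = (\<lambda>k. s * mat_app r c M u k)"
  by (simp add: mat_app_def fun_eq_iff sum_distrib_left mult.left_commute)

lemma mat_app_ev: "j < c \<Longrightarrow> mat_app r c M (\<lambda>k. if k = j then 1 else 0) = (\<lambda>k. if k < r then M k j else 0)"
proof -
  assume j: "j < c"
  have "\<And>k l. M k l * (if l = j then 1 else 0) = (if l = j then M k l else 0)" by simp
  then show ?thesis using j by (simp add: mat_app_def fun_eq_iff)
qed

locale resctx =
  fixes I :: "('v::finite, 'k::field) mpoly set"
    and beta :: "nat \<Rightarrow> nat" and a :: "nat \<Rightarrow> nat \<Rightarrow> ('v \<Rightarrow>\<^sub>0 nat)"
    and lam :: "nat \<Rightarrow> nat \<Rightarrow> nat \<Rightarrow> 'k" and p :: nat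
  assumes res: "is_min_graded_res I beta a lam p"
begin

abbreviation "R \<equiv> res_mat a lam"

lemma exact: "i \<ge> 1 \<Longrightarrow> {u \<in> vecs UNIV (beta i). mat_app (beta (i - 1)) (beta i) (R i) u = (\<lambda>_. 0)}
             = mat_app (beta i) (beta (i + 1)) (R (i + 1)) ` vecs UNIV (beta (i + 1))"
  using res by (simp add: is_min_graded_res_def)

lemma minimal: "i \<ge> 1 \<Longrightarrow> k < beta (i - 1) \<Longrightarrow> j < beta i \<Longrightarrow> R i k j \<in> ideal_gen UNIV (range var)"
  using res by (simp add: is_min_graded_res_def)

lemma lam_mdvd: "lam i k j \<noteq> 0 \<Longrightarrow> mdvd (a (i - 1) k) (a i j)"
  using res by (simp add: is_min_graded_res_def)

lemma strict: assumes "i \<ge> 1" "k < beta (i - 1)" "j < beta i" "lam i k j \<noteq> 0"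
  shows "a (i - 1) k \<noteq> a i j"
proof
  assume eq: "a (i - 1) k = a i j"
  have "Poly_Mapping.lookup (R i k j) 0 = 0" using minimal[OF assms(1-3)] by (rule ct_maxideal)
  moreover have eq': "a i j - a (i - 1) k = 0" using eq by simp
  have "R i k j = cnst (lam i k j)" unfolding res_mat_def eq' xmon_zero by simp
  ultimately show False using assms(4) by simp
qed

lemma vecs_ev: "j < b \<Longrightarrow> (\<lambda>k. if k = j then 1 else 0) \<in> vecs UNIV b"
  by (simp add: vecs_def)

lemma comp0:
  assumes i: "i \<ge> 2" and y: "y \<in> vecs UNIV (beta i)"
  shows "mat_app (beta (i - 2)) (beta (i - 1)) (R (i - 1)) (mat_app (beta (i - 1)) (beta i) (R i) y) = (\<lambda>_. 0)"
proof -
  have i1: "1 \<le> i - 1" using i by simp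
  have ii: "i - 1 + 1 = i" "i - 1 - 1 = i - 2" using i by auto
  have e: "{u \<in> vecs UNIV (beta (i - 1)). mat_app (beta (i - 2)) (beta (i - 1)) (R (i - 1)) u = (\<lambda>_. 0)}
             = mat_app (beta (i - 1)) (beta i) (R i) ` vecs UNIV (beta i)"
    using exact[OF i1] unfolding ii .
  have "mat_app (beta (i - 1)) (beta i) (R i) y \<in> mat_app (beta (i - 1)) (beta i) (R i) ` vecs UNIV (beta i)"
    using y by (rule imageI)
  then have "mat_app (beta (i - 1)) (beta i) (R i) y \<in> {u \<in> vecs UNIV (beta (i - 1)). mat_app (beta (i - 2)) (beta (i - 1)) (R (i - 1)) u = (\<lambda>_. 0)}"
    unfolding e .
  then show ?thesis by simp
qed

lemma G:
  assumes i: "i \<ge> 1" and j: "j < beta i" and y: "y \<in> vecs UNIV (beta i)"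
    and ker: "mat_app (beta (i - 1)) (beta i) (R i) (\<lambda>k. (if k = j then 1 else 0) - y k) = (\<lambda>_. 0)"
  shows "Poly_Mapping.lookup (y j) 0 = 1"
proof -
  have "(\<lambda>k. (if k = j then 1 else 0) - y k) \<in> vecs UNIV (beta i)"
    using y j by (auto simp: vecs_def)
  then have "(\<lambda>k. (if k = j then 1 else 0) - y k) \<in> {u \<in> vecs UNIV (beta i). mat_app (beta (i - 1)) (beta i) (R i) u = (\<lambda>_. 0)}"
    using ker by simp
  then have "(\<lambda>k. (if k = j then 1 else 0) - y k) \<in> mat_app (beta i) (beta (i + 1)) (R (i + 1)) ` vecs UNIV (beta (i + 1))"
    unfolding exact[OF i] .
  then obtain w where w: "(\<lambda>k. (if k = j then 1 else 0) - y k) = mat_app (beta i) (beta (i + 1)) (R (i + 1)) w"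
    by blast
  then have "1 - y j = (\<Sum>s<beta (i + 1). R (i + 1) j s * w s)"
    using fun_cong[OF w, of j] j by (simp add: mat_app_def)
  then have "Poly_Mapping.lookup (1 - y j) 0 = (\<Sum>s<beta (i + 1). Poly_Mapping.lookup (R (i + 1) j s) 0 * Poly_Mapping.lookup (w s) 0)"
    by (simp add: lookup_sum ct_mult)
  also have "\<dots> = 0"
    by (rule sum.neutral) (use j in \<open>auto intro!: ct_maxideal minimal\<close>)
  finally show ?thesis by (simp add: lookup_minus)
qed

lemma NZ: assumes i: "i \<ge> 1" and j: "j < beta i" shows "\<exists>k<beta (i - 1). lam i k j \<noteq> 0"
proof (rule ccontr)
  assume "\<not> ?thesis"
  then have z: "\<And>k. k < beta (i - 1) \<Longrightarrow> R i k j = 0" by (simp add: res_mat_def cnst_def)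
  have "mat_app (beta (i - 1)) (beta i) (R i) (\<lambda>k. (if k = j then 1 else 0) - (\<lambda>_. 0) k) = (\<lambda>_. 0)"
    using j z by (simp add: mat_app_ev fun_eq_iff)
  from G[OF i j _ this] show False by (simp add: vecs_def)
qed

lemma H:
  assumes i: "i \<ge> 2" and j: "j < beta i" and bd: "mdvd b (a i j)"
    and cm: "\<forall>k<beta (i - 1). lam i k j \<noteq> 0 \<longrightarrow> mdvd (a (i - 1) k) b"
  shows "b = a i j"
proof (rule ccontr)
  assume ne: "b \<noteq> a i j"
  define c where "c = a i j - b"
  have c0: "c \<noteq> 0"
  proof
    assume "c = 0"
    then have "mdvd (a i j) b" by (auto simp: c_def mdvd_def poly_mapping_eq_iff fun_eq_iff lookup_minus)
    then show False using ne bd mdvd_antisym by blast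
  qed
  define z where "z = (\<lambda>k. if k < beta (i - 1) then cnst (lam i k j) * xmon (b - a (i - 1) k) else (0::('v,'k) mpoly))"
  have Rev: "mat_app (beta (i - 1)) (beta i) (R i) (\<lambda>k. if k = j then 1 else 0) = (\<lambda>k. xmon c * z k)"
  proof (rule ext)
    fix k
    show "mat_app (beta (i - 1)) (beta i) (R i) (\<lambda>k. if k = j then 1 else 0) k = xmon c * z k"
    proof (cases "k < beta (i - 1) \<and> lam i k j \<noteq> 0")
      case True
      then have d1: "mdvd (a (i - 1) k) b" using cm by blast
      have "a i j - a (i - 1) k = c + (b - a (i - 1) k)"
        using d1 bd by (auto simp: c_def mdvd_def poly_mapping_eq_iff fun_eq_iff lookup_minus lookup_add)
      then show ?thesis using True j
        by (simp add: mat_app_ev z_def res_mat_def xmon_add mult.left_commute)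
    next
      case False
      then show ?thesis using j by (auto simp: mat_app_ev z_def res_mat_def cnst_def)
    qed
  qed
  have zv: "z \<in> vecs UNIV (beta (i - 1))" by (simp add: z_def vecs_def)
  have "mat_app (beta (i - 2)) (beta (i - 1)) (R (i - 1)) (\<lambda>k. xmon c * z k) = (\<lambda>_. 0)"
    using comp0[OF i vecs_ev[OF j]] unfolding Rev .
  then have "\<And>k. xmon c * mat_app (beta (i - 2)) (beta (i - 1)) (R (i - 1)) z k = 0"
    by (simp add: mat_app_smult fun_eq_iff)
  then have "mat_app (beta (i - 2)) (beta (i - 1)) (R (i - 1)) z = (\<lambda>_. 0)"
    using xmon_cancel by blast
  moreover have "i - 1 - 1 = i - 2" by simp
  ultimately have zk: "mat_app (beta (i - 1 - 1)) (beta (i - 1)) (R (i - 1)) z = (\<lambda>_. 0)"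
    by simp
  have i1: "1 \<le> i - 1" using i by simp
  have "z \<in> {u \<in> vecs UNIV (beta (i - 1)). mat_app (beta (i - 1 - 1)) (beta (i - 1)) (R (i - 1)) u = (\<lambda>_. 0)}"
    using zv zk by blast
  then have "z \<in> mat_app (beta (i - 1)) (beta (i - 1 + 1)) (R (i - 1 + 1)) ` vecs UNIV (beta (i - 1 + 1))"
    using exact[OF i1] by blast
  moreover have ii: "i - 1 + 1 = i" using i by simp
  ultimately obtain w where w: "w \<in> vecs UNIV (beta i)" "z = mat_app (beta (i - 1)) (beta i) (R i) w"
    unfolding ii by blast
  define y where "y = (\<lambda>k. xmon c * w k)"
  have yv: "y \<in> vecs UNIV (beta i)" using w(1) by (simp add: y_def vecs_def)
  have "mat_app (beta (i - 1)) (beta i) (R i) (\<lambda>k. (if k = j then 1 else 0) - y k) = (\<lambda>_. 0)"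
    unfolding mat_app_diff y_def mat_app_smult Rev w(2)[symmetric] by simp
  from G[OF _ j yv this] i have "Poly_Mapping.lookup (y j) 0 = 1" by simp
  then show False by (simp add: y_def ct_mult ct_xmon[OF c0])
qed

end


primrec Sset :: "(nat \<Rightarrow> nat) \<Rightarrow> (nat \<Rightarrow> nat \<Rightarrow> nat \<Rightarrow> 'k::zero) \<Rightarrow> nat \<Rightarrow> nat \<Rightarrow> nat set" where
  "Sset beta lam 0 j = {}"
| "Sset beta lam (Suc i) j = (if i = 0 then {j} else \<Union>{Sset beta lam i k | k. k < beta i \<and> lam (Suc i) k j \<noteq> 0})"

lemma C1a: "i \<ge> 1 \<Longrightarrow> x \<in> Lstar T Lg beta lam i j \<Longrightarrow> k \<in> Sset beta lam i j \<Longrightarrow> x \<in> Lg k"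
proof (induction i arbitrary: j k)
  case 0 then show ?case by simp
next
  case (Suc i)
  show ?case
  proof (cases "i = 0")
    case True then show ?thesis using Suc.prems by simp
  next
    case False
    then obtain k0 where k0: "k0 < beta i" "lam (Suc i) k0 j \<noteq> 0" "k \<in> Sset beta lam i k0"
      using Suc.prems(3) by auto
    have "x \<in> Lstar T Lg beta lam i k0" using Suc.prems(2) False k0 by auto
    then show ?thesis using Suc.IH[of k0 k] False k0 by simp
  qed
qed

lemma C1b: "i \<ge> 1 \<Longrightarrow> x \<in> T \<Longrightarrow> (\<forall>k\<in>Sset beta lam i j. x \<in> Lg k) \<Longrightarrow> x \<in> Lstar T Lg beta lam i j"
proof (induction i arbitrary: j)
  case 0 then show ?case by simp
next
  case (Suc i)
  show ?case
  proof (cases "i = 0")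
    case True then show ?thesis using Suc.prems by simp
  next
    case False
    have "\<And>k0. k0 < beta i \<Longrightarrow> lam (Suc i) k0 j \<noteq> 0 \<Longrightarrow> x \<in> Lstar T Lg beta lam i k0"
    proof -
      fix k0 assume k0: "k0 < beta i" "lam (Suc i) k0 j \<noteq> 0"
      have "\<forall>k\<in>Sset beta lam i k0. x \<in> Lg k" using Suc.prems(3) False k0 by auto
      then show "x \<in> Lstar T Lg beta lam i k0" using Suc.IH False Suc.prems(2) by simp
    qed
    then show ?thesis using False Suc.prems(2) by auto
  qed
qed

lemma Lstar_zero: "(\<forall>k. 0 \<in> Lg k) \<Longrightarrow> 0 \<in> T \<Longrightarrow> 0 \<in> Lstar T Lg beta lam i j"
  by (induction i arbitrary: j) auto

locale resctx2 = resctx I beta a lam p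
  for I :: "('v::finite, 'k::field) mpoly set" and beta a lam p +
  fixes m :: nat and aj :: "nat \<Rightarrow> ('v \<Rightarrow>\<^sub>0 nat)"
  assumes beta1: "beta 1 = m" and a1: "\<forall>j<m. a 1 j = aj j"
begin

abbreviation "S \<equiv> Sset beta lam"

lemma C2: "i \<ge> 1 \<Longrightarrow> j < beta i \<Longrightarrow> S i j \<noteq> {} \<and> S i j \<subseteq> {..<m} \<and> (\<forall>k\<in>S i j. mdvd (aj k) (a i j))
   \<and> (\<forall>b. (\<forall>k\<in>S i j. mdvd (aj k) b) \<longrightarrow> mdvd (a i j) b)"
proof (induction i arbitrary: j)
  case 0 then show ?case by simp
next
  case (Suc i)
  show ?case
  proof (cases "i = 0")
    case True
    then show ?thesis using Suc.prems beta1 a1 by (auto simp: mdvd_def)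
  next
    case False
    let ?K = "{k. k < beta i \<and> lam (Suc i) k j \<noteq> 0}"
    have SS: "S (Suc i) j = (\<Union>k\<in>?K. S i k)" using False by auto
    have i1: "i \<ge> 1" using False by simp
    obtain k0 where k0: "k0 < beta i" "lam (Suc i) k0 j \<noteq> 0" using NZ[of "Suc i" j] Suc.prems by auto
    have IH: "\<And>k. k \<in> ?K \<Longrightarrow> S i k \<noteq> {} \<and> S i k \<subseteq> {..<m} \<and> (\<forall>k'\<in>S i k. mdvd (aj k') (a i k))
      \<and> (\<forall>b. (\<forall>k'\<in>S i k. mdvd (aj k') b) \<longrightarrow> mdvd (a i k) b)"
      using Suc.IH[OF i1] by blast
    have dv: "\<And>k. k \<in> ?K \<Longrightarrow> mdvd (a i k) (a (Suc i) j)"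
      using lam_mdvd by fastforce
    have P1: "S (Suc i) j \<noteq> {}" using SS IH[of k0] k0 by auto
    have P2: "S (Suc i) j \<subseteq> {..<m}" using SS IH by blast
    have P3: "\<forall>k\<in>S (Suc i) j. mdvd (aj k) (a (Suc i) j)"
    proof
      fix k' assume "k' \<in> S (Suc i) j"
      then obtain k where k: "k \<in> ?K" "k' \<in> S i k" using SS by blast
      then have "mdvd (aj k') (a i k)" using IH by blast
      then show "mdvd (aj k') (a (Suc i) j)" using dv[OF k(1)] by (auto simp: mdvd_def intro: le_trans)
    qed
    have P4: "\<forall>b. (\<forall>k\<in>S (Suc i) j. mdvd (aj k) b) \<longrightarrow> mdvd (a (Suc i) j) b"
    proof (intro allI impI)
      fix b assume cb: "\<forall>k\<in>S (Suc i) j. mdvd (aj k) b"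
      define b' where "b' = a (Suc i) j - (a (Suc i) j - b)"
      have lb': "\<And>v. Poly_Mapping.lookup b' v = min (Poly_Mapping.lookup (a (Suc i) j) v) (Poly_Mapping.lookup b v)"
        by (simp add: b'_def lookup_minus)
      have "\<And>k. k \<in> ?K \<Longrightarrow> mdvd (a i k) b"
      proof -
        fix k assume k: "k \<in> ?K"
        have "\<forall>k'\<in>S i k. mdvd (aj k') b" using cb SS k by blast
        then show "mdvd (a i k) b" using IH[OF k] by blast
      qed
      then have cm: "\<forall>k<beta (Suc i - 1). lam (Suc i) k j \<noteq> 0 \<longrightarrow> mdvd (a (Suc i - 1) k) b'"
        using dv by (auto simp: mdvd_def lb')
      have "b' = a (Suc i) j"
        by (rule H) (use Suc.prems False cm in \<open>auto simp: mdvd_def lb'\<close>)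
      then show "mdvd (a (Suc i) j) b" by (metis lb' mdvd_def min.bounded_iff order_refl)
    qed
    show ?thesis using P1 P2 P3 P4 by blast
  qed
qed

lemma attain: assumes "i \<ge> 1" "j < beta i"
  shows "\<exists>k\<in>S i j. Poly_Mapping.lookup (a i j) l = Poly_Mapping.lookup (aj k) l"
proof -
  have c: "S i j \<noteq> {}" "S i j \<subseteq> {..<m}" "\<forall>k\<in>S i j. mdvd (aj k) (a i j)"
    "\<forall>b. (\<forall>k\<in>S i j. mdvd (aj k) b) \<longrightarrow> mdvd (a i j) b"
    using C2[OF assms] by auto
  have fin: "finite (S i j)" using c(2) finite_subset by blast
  define M where "M = Max ((\<lambda>k. Poly_Mapping.lookup (aj k) l) ` S i j)"
  have Mg: "\<And>k. k \<in> S i j \<Longrightarrow> Poly_Mapping.lookup (aj k) l \<le> M"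
    unfolding M_def using fin by auto
  obtain k0 where k0: "k0 \<in> S i j" "M = Poly_Mapping.lookup (aj k0) l"
    unfolding M_def using fin c(1) by (metis (no_types, lifting) Max_in finite_imageI image_iff image_is_empty)
  define b where "b = a i j - Poly_Mapping.single l (Poly_Mapping.lookup (a i j) l - M)"
  have lb: "\<And>v. Poly_Mapping.lookup b v = (if v = l then min (Poly_Mapping.lookup (a i j) l) M else Poly_Mapping.lookup (a i j) v)"
    by (simp add: b_def lookup_minus lookup_single when_def min_def)
  have "\<forall>k\<in>S i j. mdvd (aj k) b"
    using c(3) Mg by (auto simp: mdvd_def lb)
  then have "mdvd (a i j) b" using c(4) by blast
  then have "Poly_Mapping.lookup (a i j) l \<le> M" by (auto simp: mdvd_def lb dest: spec[of _ l])
  moreover have "M \<le> Poly_Mapping.lookup (a i j) l" using k0 c(3) by (auto simp: mdvd_def)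
  ultimately show ?thesis using k0 by (metis le_antisym)
qed

end


lemma keys_prod_sub:
  fixes f :: "'l \<Rightarrow> ('w,'k::comm_ring_1) mpoly"
  assumes "finite A"
  shows "Poly_Mapping.keys (\<Prod>l\<in>A. f l) \<subseteq> {\<Sum>l\<in>A. e l | e. \<forall>l\<in>A. e l \<in> Poly_Mapping.keys (f l)}"
  using assms
proof (induction A rule: finite_induct)
  case empty
  then show ?case by simp
next
  case (insert x A)
  show ?case
  proof
    fix d assume "d \<in> Poly_Mapping.keys (\<Prod>l\<in>insert x A. f l)"
    then have "d \<in> Poly_Mapping.keys (f x * (\<Prod>l\<in>A. f l))" using insert by simp
    then obtain u v where uv: "u \<in> Poly_Mapping.keys (f x)" "v \<in> Poly_Mapping.keys (\<Prod>l\<in>A. f l)" "d = u + v"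
      using keys_mult[of "f x" "\<Prod>l\<in>A. f l"] by blast
    from uv(2) insert.IH obtain e where e: "v = (\<Sum>l\<in>A. e l)" "\<forall>l\<in>A. e l \<in> Poly_Mapping.keys (f l)" by blast
    define e' where "e' = e(x := u)"
    have "(\<Sum>l\<in>A. e' l) = (\<Sum>l\<in>A. e l)" using insert(2) by (intro sum.cong) (auto simp: e'_def)
    then have "d = (\<Sum>l\<in>insert x A. e' l)" using insert uv e by (simp add: e'_def)
    moreover have "\<forall>l\<in>insert x A. e' l \<in> Poly_Mapping.keys (f l)" using e uv by (auto simp: e'_def)
    ultimately show "d \<in> {\<Sum>l\<in>insert x A. e l | e. \<forall>l\<in>insert x A. e l \<in> Poly_Mapping.keys (f l)}" by blast
  qed
qed

lemma prod_xmon: "finite A \<Longrightarrow> (\<Prod>l\<in>A. xmon (e l)) = (xmon (\<Sum>l\<in>A. e l) :: ('w,'k::comm_ring_1) mpoly)"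
  by (induction A rule: finite_induct) (auto simp: xmon_zero xmon_add)

lemma Tlvars_sub: "Tlvars mT l \<subseteq> Tvars mT"
  by (auto simp: Tlvars_def Tvars_def)

lemma Tlvars_fst: "v \<in> Tlvars mT l \<Longrightarrow> fst v = l"
  by (auto simp: Tlvars_def)

definition Lgen :: "('v \<Rightarrow> nat) \<Rightarrow> ('v \<Rightarrow> nat \<Rightarrow> ('v \<times> nat, 'k::comm_ring_1) mpoly set) \<Rightarrow> ('v \<Rightarrow> nat)
   \<Rightarrow> ('v \<times> nat, 'k) mpoly set" where
  "Lgen mT LL b = ideal_gen (polyring (Tvars mT)) {\<Prod>l\<in>UNIV. f l | f. \<forall>l. f l \<in> LL l (b l)}"

lemma keys_sum_nat: "Poly_Mapping.keys (\<Sum>l\<in>A. (e l :: 'a \<Rightarrow>\<^sub>0 nat)) \<subseteq> (\<Union>l\<in>A. Poly_Mapping.keys (e l))"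
  by (rule keys_sum)

lemma P1:
  fixes LL :: "'v::finite \<Rightarrow> nat \<Rightarrow> ('v \<times> nat, 'k::comm_ring_1) mpoly set"
  assumes mon: "\<forall>l. monomial_ideal (polyring (Tlvars mT l)) (LL l (b l))"
    and f: "f \<in> Lgen mT LL b" and d: "d \<in> Poly_Mapping.keys f"
  shows "Poly_Mapping.keys d \<subseteq> Tvars mT \<and> (\<exists>e. (\<forall>l. xmon (e l) \<in> LL l (b l)) \<and> mdvd (\<Sum>l\<in>UNIV. e l) d)"
proof -
  obtain N c g where fe: "f = (\<Sum>s<(N::nat). c s * g s)"
    and cg: "\<forall>s<N. c s \<in> polyring (Tvars mT) \<and> g s \<in> {\<Prod>l\<in>UNIV. f l | f. \<forall>l. f l \<in> LL l (b l)}"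
    using f unfolding Lgen_def ideal_gen_def by blast
  from d fe keys_sum[of "\<lambda>s. c s * g s" "{..<N}"] obtain s where s: "s < N" "d \<in> Poly_Mapping.keys (c s * g s)" by blast
  from cg s obtain ff where ff: "g s = (\<Prod>l\<in>UNIV. ff l)" "\<forall>l. ff l \<in> LL l (b l)" by blast
  from s(2) keys_mult[of "c s" "g s"] obtain t u where tu: "t \<in> Poly_Mapping.keys (c s)" "u \<in> Poly_Mapping.keys (g s)" "d = t + u"
    by blast
  have sub: "Poly_Mapping.keys (\<Prod>l\<in>UNIV. ff l) \<subseteq> {\<Sum>l\<in>UNIV. e l | e. \<forall>l\<in>UNIV. e l \<in> Poly_Mapping.keys (ff l)}"
    by (rule keys_prod_sub) simp
  have "u \<in> {\<Sum>l\<in>UNIV. e l | e. \<forall>l\<in>UNIV. e l \<in> Poly_Mapping.keys (ff l)}"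
    using sub tu(2) unfolding ff(1) by (rule subsetD)
  then obtain e where e: "u = (\<Sum>l\<in>UNIV. e l)" "\<forall>l. e l \<in> Poly_Mapping.keys (ff l)"
    by blast
  have xe: "\<forall>l. xmon (e l) \<in> LL l (b l)"
  proof
    fix l show "xmon (e l) \<in> LL l (b l)"
      by (rule M1[of "Tlvars mT l" "LL l (b l)" "ff l" "e l"]) (use mon ff(2) e(2) in blast)+
  qed
  have ke: "\<And>l. Poly_Mapping.keys (e l) \<subseteq> Tvars mT"
  proof -
    fix l
    have "monomial_ideal (polyring (Tlvars mT l)) (LL l (b l))" using mon by (rule spec)
    then have "LL l (b l) \<subseteq> polyring (Tlvars mT l)" by (rule ideal_sub)
    moreover have "xmon (e l) \<in> LL l (b l)" using xe by (rule spec)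
    ultimately have "(xmon (e l) :: ('v \<times> nat, 'k) mpoly) \<in> polyring (Tlvars mT l)" by (rule subsetD)
    then show "Poly_Mapping.keys (e l) \<subseteq> Tvars mT" using Tlvars_sub[of mT l] by (simp add: xmon_polyring)
  qed
  have "c s \<in> polyring (Tvars mT)" using cg s by blast
  then have kt: "Poly_Mapping.keys t \<subseteq> Tvars mT" using tu(1) by (simp add: polyring_def)
  have "Poly_Mapping.keys u \<subseteq> (\<Union>l\<in>UNIV. Poly_Mapping.keys (e l))" using keys_sum_nat[of e UNIV] unfolding e(1) .
  then have "Poly_Mapping.keys u \<subseteq> Tvars mT" using ke by blast
  then have "Poly_Mapping.keys d \<subseteq> Tvars mT" using kt by (simp add: tu(3) keys_add_sub)
  moreover have "mdvd (\<Sum>l\<in>UNIV. e l) d" by (simp add: tu(3) e(1)[symmetric] mdvd_def lookup_add)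
  ultimately show ?thesis using xe by blast
qed

lemma P2:
  fixes LL :: "'v::finite \<Rightarrow> nat \<Rightarrow> ('v \<times> nat, 'k::comm_ring_1) mpoly set"
  assumes kd: "Poly_Mapping.keys d \<subseteq> Tvars mT" and xe: "\<forall>l. xmon (e l) \<in> LL l (b l)"
    and dv: "mdvd (\<Sum>l\<in>UNIV. e l) d"
  shows "xmon d \<in> Lgen mT LL b"
proof -
  define E where "E = (\<Sum>l\<in>UNIV. e l)"
  have dE: "d = (d - E) + E" using dv
    by (auto simp: E_def mdvd_def poly_mapping_eq_iff fun_eq_iff lookup_add lookup_minus)
  have "xmon d = (xmon (d - E) :: ('v \<times> nat, 'k) mpoly) * (\<Prod>l\<in>UNIV. xmon (e l))"
    by (subst dE) (simp add: xmon_add prod_xmon E_def)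
  moreover have "xmon (d - E) \<in> polyring (Tvars mT)"
    using kd keys_diff_sub[of d E] by (simp add: xmon_polyring)
  moreover have "(\<Prod>l\<in>UNIV. xmon (e l)) \<in> {\<Prod>l\<in>UNIV. f l | f. \<forall>l. f l \<in> LL l (b l)}"
    using xe by blast
  ultimately show ?thesis unfolding Lgen_def ideal_gen_def
    by (intro CollectI exI[of _ 1] exI[of _ "\<lambda>_. xmon (d - E)"] exI[of _ "\<lambda>_. \<Prod>l\<in>UNIV. xmon (e l)"]) simp
qed

lemma block_sum:
  assumes "\<forall>l. Poly_Mapping.keys (E l) \<subseteq> Tlvars mT l"
  shows "Poly_Mapping.lookup (\<Sum>l\<in>(UNIV::'v::finite set). E l) w = Poly_Mapping.lookup (E (fst w)) w"
proof -
  have "\<And>l. l \<noteq> fst w \<Longrightarrow> Poly_Mapping.lookup (E l) w = 0"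
    using assms Tlvars_fst by (metis in_keys_iff subsetD)
  then have "(\<Sum>l\<in>UNIV. Poly_Mapping.lookup (E l) w) = (\<Sum>l\<in>UNIV. if l = fst w then Poly_Mapping.lookup (E l) w else 0)"
    by (intro sum.cong) auto
  then show ?thesis by (simp add: lookup_sum)
qed



lemma sum_lessThan_add_split: "(\<Sum>s<(N1 + N2::nat). f s) = (\<Sum>s<N1. f s) + (\<Sum>s<N2. f (s + N1))"
proof -
  have "(\<Sum>s<N1 + N2. f s) = (\<Sum>s\<in>{0..<N1}. f s) + (\<Sum>s\<in>{N1..<N1 + N2}. f s)"
    using sum.atLeastLessThan_concat[of 0 N1 "N1 + N2" f] by (simp add: atLeast0LessThan)
  also have "(\<Sum>s\<in>{N1..<N1 + N2}. f s) = (\<Sum>s\<in>{0..<N2}. f (s + N1))"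
    using sum.shift_bounds_nat_ivl[of f 0 N1 N2] by (simp add: add.commute)
  finally show ?thesis by (simp add: atLeast0LessThan)
qed

lemma MG_zero: "(\<lambda>_. 0) \<in> module_gen R G"
  unfolding module_gen_def by (intro CollectI exI[of _ 0]) simp

lemma MG_add:
  assumes x: "x \<in> module_gen R G" and y: "y \<in> module_gen R G"
  shows "(\<lambda>k. x k + y k) \<in> module_gen R G"
proof -
  obtain N1 c1 w1 where 1: "x = (\<lambda>k. \<Sum>s<(N1::nat). c1 s * w1 s k)" "\<forall>s<N1. c1 s \<in> R \<and> w1 s \<in> G"
    using x unfolding module_gen_def by blast
  obtain N2 c2 w2 where 2: "y = (\<lambda>k. \<Sum>s<(N2::nat). c2 s * w2 s k)" "\<forall>s<N2. c2 s \<in> R \<and> w2 s \<in> G"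
    using y unfolding module_gen_def by blast
  define c where "c = (\<lambda>s. if s < N1 then c1 s else c2 (s - N1))"
  define w where "w = (\<lambda>s. if s < N1 then w1 s else w2 (s - N1))"
  have "(\<lambda>k. x k + y k) = (\<lambda>k. \<Sum>s<N1 + N2. c s * w s k)"
    unfolding sum_lessThan_add_split 1 2 by (simp add: c_def w_def)
  moreover have "\<forall>s<N1 + N2. c s \<in> R \<and> w s \<in> G"
    using 1(2) 2(2) by (auto simp: c_def w_def)
  ultimately show ?thesis unfolding module_gen_def by blast
qed

lemma MG_sum:
  assumes "finite A" "\<And>a. a \<in> A \<Longrightarrow> f a \<in> module_gen R G"
  shows "(\<lambda>k. \<Sum>a\<in>A. f a k) \<in> module_gen R G"
  using assms
proof (induction A rule: finite_induct)
  case empty then show ?case by (simp add: MG_zero)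
next
  case (insert x A)
  have "(\<lambda>k. f x k + (\<Sum>a\<in>A. f a k)) \<in> module_gen R G"
    using insert by (intro MG_add) auto
  then show ?case using insert by simp
qed

lemma MG_single:
  assumes "c \<in> R" "w \<in> G"
  shows "(\<lambda>k. c * w k) \<in> module_gen R G"
  unfolding module_gen_def
  by (intro CollectI exI[of _ 1] exI[of _ "\<lambda>_. c"] exI[of _ "\<lambda>_. w"]) (use assms in simp)



lemma le_sum_e: "Poly_Mapping.lookup (e l) w \<le> Poly_Mapping.lookup (\<Sum>l\<in>(UNIV::'v::finite set). (e l :: 'w \<Rightarrow>\<^sub>0 nat)) w"
  unfolding lookup_sum by (rule member_le_sum) auto

locale bigctx = resctx2 I beta a lam p m aj
  for I :: "('v::finite, 'k::field) mpoly set" and beta a lam p m aj +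
  fixes mT :: "'v \<Rightarrow> nat" and LL :: "'v \<Rightarrow> nat \<Rightarrow> ('v \<times> nat, 'k) mpoly set"
  assumes monI: "monomial_ideal UNIV I" and I_proper: "I \<noteq> UNIV"
    and GI: "mingens I = xmon ` aj ` {..<m}"
    and LLmon: "\<forall>l. \<forall>j<m. monomial_ideal (polyring (Tlvars mT l)) (LL l (Poly_Mapping.lookup (aj j) l))"
    and LLlin: "\<forall>l. \<forall>j<m. has_linear_resolution (Tlvars mT l) (LL l (Poly_Mapping.lookup (aj j) l)) (Poly_Mapping.lookup (aj j) l)"
    and LLincl: "\<forall>l. \<forall>j<m. \<forall>k<m. Poly_Mapping.lookup (aj j) l \<ge> Poly_Mapping.lookup (aj k) l
                   \<longrightarrow> LL l (Poly_Mapping.lookup (aj j) l) \<subseteq> LL l (Poly_Mapping.lookup (aj k) l)"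
begin

abbreviation "T \<equiv> polyring (Tvars mT) :: ('v \<times> nat, 'k) mpoly set"

definition Lg :: "nat \<Rightarrow> ('v \<times> nat, 'k) mpoly set" where
  "Lg j = Lgen mT LL (Poly_Mapping.lookup (aj j))"

lemma monj: "j < m \<Longrightarrow> \<forall>l. monomial_ideal (polyring (Tlvars mT l)) (LL l (Poly_Mapping.lookup (aj j) l))"
  using LLmon by blast

lemma keys_e: assumes "j < m" "xmon e \<in> LL l (Poly_Mapping.lookup (aj j) l)"
  shows "Poly_Mapping.keys e \<subseteq> Tlvars mT l"
proof -
  have "monomial_ideal (polyring (Tlvars mT l)) (LL l (Poly_Mapping.lookup (aj j) l))" using monj[OF assms(1)] by blast
  then have "LL l (Poly_Mapping.lookup (aj j) l) \<subseteq> polyring (Tlvars mT l)" by (rule ideal_sub)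
  then have "(xmon e :: ('v \<times> nat, 'k) mpoly) \<in> polyring (Tlvars mT l)" using assms(2) by (rule subsetD)
  then show ?thesis by (simp add: xmon_polyring)
qed

lemma aj_nz: assumes j: "j < m" shows "aj j \<noteq> 0"
proof
  assume z: "aj j = 0"
  have "xmon (aj j) \<in> mingens I" using GI j by blast
  then have "xmon (aj j) \<in> I" unfolding mingens_def by auto
  then have one: "(1::('v,'k) mpoly) \<in> I" by (simp add: z xmon_zero)
  have "is_ideal UNIV I" using monI by (simp add: monomial_ideal_def)
  then have "\<forall>r. r * 1 \<in> I" using one unfolding is_ideal_def by blast
  then have "I = UNIV" by auto
  then show False using I_proper by simp
qed

lemma core1:
  assumes j: "j < m" and x: "x \<in> Lg j" and d: "d \<in> Poly_Mapping.keys x"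
  shows "\<exists>v\<in>Tvars mT. 1 \<le> Poly_Mapping.lookup d v \<and> xmon (d - Poly_Mapping.single v 1) \<in> T"
proof -
  obtain e where kd: "Poly_Mapping.keys d \<subseteq> Tvars mT"
    and xe: "\<forall>l. xmon (e l) \<in> LL l (Poly_Mapping.lookup (aj j) l)" and dv: "mdvd (\<Sum>l\<in>UNIV. e l) d"
    using P1[OF monj[OF j] x[unfolded Lg_def] d] by blast
  obtain l where l: "Poly_Mapping.lookup (aj j) l \<noteq> 0"
    using aj_nz[OF j] by (metis lookup_zero poly_mapping_eqI)
  have lin: "has_linear_resolution (Tlvars mT l) (LL l (Poly_Mapping.lookup (aj j) l)) (Poly_Mapping.lookup (aj j) l)"
    using LLlin j by blast
  have mon: "monomial_ideal (polyring (Tlvars mT l)) (LL l (Poly_Mapping.lookup (aj j) l))"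
    using LLmon j by blast
  obtain t where t: "mdvd t (e l)" "degm t = Poly_Mapping.lookup (aj j) l"
    using M2[OF lin mon] xe by blast
  have "Poly_Mapping.keys t \<noteq> {}"
  proof
    assume "Poly_Mapping.keys t = {}"
    then have "degm t = 0" by (simp add: degm_def)
    then show False using t(2) l by simp
  qed
  then obtain v where v: "v \<in> Poly_Mapping.keys t" by blast
  then have "0 < Poly_Mapping.lookup t v" by (simp add: in_keys_iff)
  also have "\<dots> \<le> Poly_Mapping.lookup (e l) v" using t(1) unfolding mdvd_def by blast
  finally have ev: "0 < Poly_Mapping.lookup (e l) v" .
  then have "v \<in> Poly_Mapping.keys (e l)" by (simp add: in_keys_iff)
  moreover have "Poly_Mapping.keys (e l) \<subseteq> Tlvars mT l" using keys_e[OF j] xe by blast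
  ultimately have vT: "v \<in> Tvars mT" using Tlvars_sub[of mT l] by blast
  have "Poly_Mapping.lookup (\<Sum>l\<in>UNIV. e l) v \<le> Poly_Mapping.lookup d v" using dv unfolding mdvd_def by blast
  then have "Poly_Mapping.lookup (e l) v \<le> Poly_Mapping.lookup d v"
    using le_sum_e[of e l v] by linarith
  then have "1 \<le> Poly_Mapping.lookup d v" using ev by simp
  moreover have "xmon (d - Poly_Mapping.single v 1) \<in> T"
    using kd keys_diff_sub[of d "Poly_Mapping.single v 1"] by (simp add: xmon_polyring)
  ultimately show ?thesis using vT by blast
qed

lemma Lstar_Suc: "i' \<ge> 1 \<Longrightarrow> Lstar T Lg beta lam (Suc i') j = T \<inter> \<Inter>{Lstar T Lg beta lam i' k | k. k < beta i' \<and> lam (Suc i') k j \<noteq> 0}"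
  by simp

lemma core2:
  assumes i': "i' \<ge> 1" and j: "j < beta (Suc i')" and k: "k < beta i'" and lk: "lam (Suc i') k j \<noteq> 0"
    and x: "x \<in> Lstar T Lg beta lam (Suc i') j" and d: "d \<in> Poly_Mapping.keys x"
  shows "\<exists>v\<in>Tvars mT. 1 \<le> Poly_Mapping.lookup d v \<and> xmon (d - Poly_Mapping.single v 1) \<in> Lstar T Lg beta lam i' k"
proof -
  have i1: "Suc i' \<ge> 1" by simp
  have xT: "x \<in> T" using x i' by simp
  then have kd: "Poly_Mapping.keys d \<subseteq> Tvars mT" using d by (simp add: polyring_def)
  have xL: "\<And>k'. k' \<in> S (Suc i') j \<Longrightarrow> x \<in> Lg k'" using C1a[OF i1 x] by blast
  have Sm: "S (Suc i') j \<subseteq> {..<m}" using C2[OF i1 j] by blast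
  have c2k: "S i' k \<subseteq> {..<m}" "\<forall>k'\<in>S i' k. mdvd (aj k') (a i' k)" using C2[OF i' k] by blast+
  have Ssub: "S i' k \<subseteq> S (Suc i') j" using i' k lk by auto
  have md: "mdvd (a i' k) (a (Suc i') j)" using lam_mdvd[OF lk] by simp
  have ne: "a i' k \<noteq> a (Suc i') j" using strict[of "Suc i'" k j] k j lk by simp
  have "\<not> mdvd (a (Suc i') j) (a i' k)" using ne mdvd_antisym[OF md] by blast
  then obtain l where "\<not> Poly_Mapping.lookup (a (Suc i') j) l \<le> Poly_Mapping.lookup (a i' k) l"
    unfolding mdvd_def by blast
  then have lt: "Poly_Mapping.lookup (a i' k) l < Poly_Mapping.lookup (a (Suc i') j) l" by simp
  obtain k0 where k0: "k0 \<in> S (Suc i') j" "Poly_Mapping.lookup (a (Suc i') j) l = Poly_Mapping.lookup (aj k0) l"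
    using attain[OF i1 j] by blast
  obtain k1 where k1: "k1 \<in> S i' k" "Poly_Mapping.lookup (a i' k) l = Poly_Mapping.lookup (aj k1) l"
    using attain[OF i' k] by blast
  have k0m: "k0 < m" using k0(1) Sm by blast
  have k1m: "k1 < m" using k1(1) c2k(1) by blast
  have lt01: "Poly_Mapping.lookup (aj k1) l < Poly_Mapping.lookup (aj k0) l" using lt k0 k1 by simp
  obtain e0 where xe0: "\<forall>l. xmon (e0 l) \<in> LL l (Poly_Mapping.lookup (aj k0) l)" and dv0: "mdvd (\<Sum>l\<in>UNIV. e0 l) d"
    using P1[OF monj[OF k0m] xL[OF k0(1), unfolded Lg_def] d] by blast
  have d0: "\<And>w. Poly_Mapping.lookup (e0 l) w \<le> Poly_Mapping.lookup d w"
  proof -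
    fix w
    have "Poly_Mapping.lookup (\<Sum>l\<in>UNIV. e0 l) w \<le> Poly_Mapping.lookup d w" using dv0 unfolding mdvd_def by blast
    then show "Poly_Mapping.lookup (e0 l) w \<le> Poly_Mapping.lookup d w" using le_sum_e[of e0 l w] by linarith
  qed
  have incl01: "LL l (Poly_Mapping.lookup (aj k0) l) \<subseteq> LL l (Poly_Mapping.lookup (aj k1) l)"
    using LLincl k0m k1m lt01 by simp
  have x0l: "xmon (e0 l) \<in> LL l (Poly_Mapping.lookup (aj k0) l)" using xe0 by blast
  have x1l: "xmon (e0 l) \<in> LL l (Poly_Mapping.lookup (aj k1) l)" using x0l incl01 by blast
  have lin1: "has_linear_resolution (Tlvars mT l) (LL l (Poly_Mapping.lookup (aj k1) l)) (Poly_Mapping.lookup (aj k1) l)"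
    using LLlin k1m by blast
  have mon1: "monomial_ideal (polyring (Tlvars mT l)) (LL l (Poly_Mapping.lookup (aj k1) l))"
    using LLmon k1m by blast
  have lin0: "has_linear_resolution (Tlvars mT l) (LL l (Poly_Mapping.lookup (aj k0) l)) (Poly_Mapping.lookup (aj k0) l)"
    using LLlin k0m by blast
  have mon0: "monomial_ideal (polyring (Tlvars mT l)) (LL l (Poly_Mapping.lookup (aj k0) l))"
    using LLmon k0m by blast
  obtain t where t: "mdvd t (e0 l)" "degm t = Poly_Mapping.lookup (aj k1) l" "xmon t \<in> LL l (Poly_Mapping.lookup (aj k1) l)"
    using M2[OF lin1 mon1 x1l] by blast
  obtain t' where t': "mdvd t' (e0 l)" "degm t' = Poly_Mapping.lookup (aj k0) l"
    using M2[OF lin0 mon0 x0l] by blast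
  have "degm t < degm (e0 l)" using degm_mono[OF t'(1)] t(2) t'(2) lt01 by linarith
  then have "t \<noteq> e0 l" by blast
  then have "\<not> mdvd (e0 l) t" using mdvd_antisym[OF t(1)] by blast
  then obtain v where "\<not> Poly_Mapping.lookup (e0 l) v \<le> Poly_Mapping.lookup t v"
    unfolding mdvd_def by blast
  then have v: "Poly_Mapping.lookup t v < Poly_Mapping.lookup (e0 l) v" by simp
  have ke0: "Poly_Mapping.keys (e0 l) \<subseteq> Tlvars mT l" using keys_e[OF k0m x0l] .
  have "v \<in> Poly_Mapping.keys (e0 l)" using v by (simp add: in_keys_iff)
  then have vl: "v \<in> Tlvars mT l" using ke0 by blast
  then have fv: "fst v = l" by (rule Tlvars_fst)
  have vT: "v \<in> Tvars mT" using vl Tlvars_sub[of mT l] by blast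
  have dv1: "1 \<le> Poly_Mapping.lookup d v" using v d0[of v] by linarith
  define sv where "sv = (Poly_Mapping.single v 1 :: ('v \<times> nat) \<Rightarrow>\<^sub>0 nat)"
  define e' where "e' = e0 l - sv"
  have le': "\<And>w. Poly_Mapping.lookup e' w = Poly_Mapping.lookup (e0 l) w - (if w = v then 1 else 0)"
    by (simp add: e'_def sv_def lookup_minus lookup_single when_def)
  have te': "mdvd t e'" unfolding mdvd_def le'
  proof
    fix w show "Poly_Mapping.lookup t w \<le> Poly_Mapping.lookup (e0 l) w - (if w = v then 1 else 0)"
    proof -
      have tw: "Poly_Mapping.lookup t w \<le> Poly_Mapping.lookup (e0 l) w" using t(1) unfolding mdvd_def by blast
      then show ?thesis using v by (cases "w = v") auto
    qed
  qed
  have ke': "Poly_Mapping.keys (e' - t) \<subseteq> Tlvars mT l"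
    using keys_diff_sub[of e' t] keys_diff_sub[of "e0 l" sv] ke0 unfolding e'_def by blast
  have e'eq: "e' = (e' - t) + t" using te' unfolding mdvd_def
    by (simp add: poly_mapping_eq_iff fun_eq_iff lookup_add lookup_minus)
  have "is_ideal (polyring (Tlvars mT l)) (LL l (Poly_Mapping.lookup (aj k1) l))"
    using mon1 by (simp add: monomial_ideal_def)
  moreover have "(xmon (e' - t) :: ('v \<times> nat, 'k) mpoly) \<in> polyring (Tlvars mT l)"
    using ke' by (simp add: xmon_polyring)
  ultimately have "xmon (e' - t) * xmon t \<in> LL l (Poly_Mapping.lookup (aj k1) l)"
    using t(3) unfolding is_ideal_def by blast
  then have xe': "xmon e' \<in> LL l (Poly_Mapping.lookup (aj k1) l)"
    by (subst e'eq) (simp add: xmon_add)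
  have dsT: "xmon (d - sv) \<in> T"
    using kd keys_diff_sub[of d sv] by (simp add: xmon_polyring)
  have inLg: "xmon (d - sv) \<in> Lg k'" if k': "k' \<in> S i' k" for k'
  proof -
    have k'm: "k' < m" using k' c2k(1) by blast
    have xk': "x \<in> Lg k'" using xL Ssub k' by blast
    have "Poly_Mapping.lookup (aj k') l \<le> Poly_Mapping.lookup (a i' k) l" using c2k(2) k' unfolding mdvd_def by blast
    then have "Poly_Mapping.lookup (aj k') l \<le> Poly_Mapping.lookup (aj k1) l" using k1(2) by simp
    then have incl: "LL l (Poly_Mapping.lookup (aj k1) l) \<subseteq> LL l (Poly_Mapping.lookup (aj k') l)"
      using LLincl k1m k'm by blast
    obtain e1 where xe1: "\<forall>l. xmon (e1 l) \<in> LL l (Poly_Mapping.lookup (aj k') l)" and dv1: "mdvd (\<Sum>l\<in>UNIV. e1 l) d"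
      using P1[OF monj[OF k'm] xk'[unfolded Lg_def] d] by blast
    define e2 where "e2 = e1(l := e')"
    have xe2: "\<forall>l'. xmon (e2 l') \<in> LL l' (Poly_Mapping.lookup (aj k') l')"
      using xe1 xe' incl by (auto simp: e2_def)
    have ke2: "\<forall>l'. Poly_Mapping.keys (e2 l') \<subseteq> Tlvars mT l'"
      using keys_e[OF k'm] xe2 by blast
    have "mdvd (\<Sum>l\<in>UNIV. e2 l) (d - sv)"
      unfolding mdvd_def
    proof
      fix w
      have bs: "Poly_Mapping.lookup (\<Sum>l\<in>UNIV. e2 l) w = Poly_Mapping.lookup (e2 (fst w)) w"
        by (rule block_sum[OF ke2])
      show "Poly_Mapping.lookup (\<Sum>l\<in>UNIV. e2 l) w \<le> Poly_Mapping.lookup (d - sv) w"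
      proof (cases "fst w = l")
        case True
        then show ?thesis using d0[of w] unfolding bs by (auto simp: e2_def le' lookup_minus sv_def lookup_single when_def)
      next
        case False
        then have wv: "w \<noteq> v" using fv by blast
        have "Poly_Mapping.lookup (\<Sum>l\<in>UNIV. e1 l) w \<le> Poly_Mapping.lookup d w" using dv1 unfolding mdvd_def by blast
        then have "Poly_Mapping.lookup (e1 (fst w)) w \<le> Poly_Mapping.lookup d w" using le_sum_e[of e1 "fst w" w] by linarith
        then show ?thesis using False wv unfolding bs by (simp add: e2_def lookup_minus sv_def lookup_single when_def)
      qed
    qed
    moreover have "Poly_Mapping.keys (d - sv) \<subseteq> Tvars mT" using kd keys_diff_sub[of d sv] by blast
    ultimately show ?thesis unfolding Lg_def
      by (intro P2[where LL=LL and e=e2 and b="Poly_Mapping.lookup (aj k')"]) (use xe2 in auto)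
  qed
  have "xmon (d - sv) \<in> Lstar T Lg beta lam i' k"
    by (rule C1b[OF i' dsT]) (use inLg in blast)
  then show ?thesis using vT dv1 unfolding sv_def by blast
qed

end


context bigctx begin

lemma zero_Lg: "0 \<in> Lg k"
  unfolding Lg_def Lgen_def ideal_gen_def by (intro CollectI exI[of _ 0]) simp

lemma core:
  assumes i: "i > 0" and j: "j < beta i" and k0: "k0 < beta (i - 1)" and lk: "lam i k0 j \<noteq> 0"
    and x: "x \<in> Lstar T Lg beta lam i j" and d: "d \<in> Poly_Mapping.keys x"
  shows "\<exists>v\<in>Tvars mT. 1 \<le> Poly_Mapping.lookup d v \<and> xmon (d - Poly_Mapping.single v 1) \<in> Lstar T Lg beta lam (i - 1) k0"
proof (cases "i = 1")
  case True
  then have jm: "j < m" using j beta1 by simp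
  have "x \<in> Lg j" using x True by simp
  from core1[OF jm this d] have "\<exists>v\<in>Tvars mT. 1 \<le> Poly_Mapping.lookup d v \<and> xmon (d - Poly_Mapping.single v 1) \<in> Lstar T Lg beta lam 0 k0"
    by simp
  then show ?thesis using True by simp
next
  case False
  obtain i' where ii: "i = Suc i'" using i by (cases i) auto
  have i1: "i' \<ge> 1" using False ii by simp
  have "j < beta (Suc i')" "k0 < beta i'" "lam (Suc i') k0 j \<noteq> 0" "x \<in> Lstar T Lg beta lam (Suc i') j"
    using j k0 lk x unfolding ii by simp_all
  from core2[OF i1 this d] show ?thesis unfolding ii by simp
qed

theorem main:
  "\<forall>i>0. \<forall>u \<in> Fstar (polyring (Tvars mT))
             (\<lambda>j. ideal_gen (polyring (Tvars mT))
                    {\<Prod>l\<in>UNIV. f l | f. \<forall>l. f l \<in> LL l (Poly_Mapping.lookup (aj j) l)})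
             beta lam i.
           dstar beta lam i u \<in>
             module_gen (polyring (Tvars mT))
               {(\<lambda>k. g * v k) | g v. g \<in> ideal_gen (polyring (Tvars mT)) (var ` Tvars mT)
                   \<and> v \<in> Fstar (polyring (Tvars mT))
                          (\<lambda>j. ideal_gen (polyring (Tvars mT))
                                 {\<Prod>l\<in>UNIV. f l | f. \<forall>l. f l \<in> LL l (Poly_Mapping.lookup (aj j) l)})
                          beta lam (i - 1)}"
proof -
  have eqL: "(\<lambda>j. ideal_gen (polyring (Tvars mT))
                    {\<Prod>l\<in>UNIV. f l | f. \<forall>l. f l \<in> LL l (Poly_Mapping.lookup (aj j) l)}) = Lg"
    by (simp add: fun_eq_iff Lg_def Lgen_def)
  show ?thesis unfolding eqL
  proof (intro allI impI ballI)
    fix i u assume i: "0 < i" and u: "u \<in> Fstar T Lg beta lam i"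
    define G where "G = {(\<lambda>k. g * v k) | g v. g \<in> ideal_gen T (var ` Tvars mT) \<and> v \<in> Fstar T Lg beta lam (i - 1)}"
    define tm where "tm = (\<lambda>j dd k0 k. if k = k0 then cnst (lam i k0 j) * Poly_Mapping.single dd (Poly_Mapping.lookup (u j) dd) else (0::('v \<times> nat, 'k) mpoly))"
    have dec: "dstar beta lam i u = (\<lambda>k. \<Sum>j<beta i. \<Sum>dd\<in>Poly_Mapping.keys (u j). \<Sum>k0<beta (i - 1). tm j dd k0 k)"
    proof (rule ext)
      fix k
      show "dstar beta lam i u k = (\<Sum>j<beta i. \<Sum>dd\<in>Poly_Mapping.keys (u j). \<Sum>k0<beta (i - 1). tm j dd k0 k)"
      proof (cases "k < beta (i - 1)")
        case True
        have "\<And>j dd. (\<Sum>k0<beta (i - 1). tm j dd k0 k) = cnst (lam i k j) * Poly_Mapping.single dd (Poly_Mapping.lookup (u j) dd)"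
          using True by (simp add: tm_def)
        then have "(\<Sum>j<beta i. \<Sum>dd\<in>Poly_Mapping.keys (u j). \<Sum>k0<beta (i - 1). tm j dd k0 k)
           = (\<Sum>j<beta i. cnst (lam i k j) * (\<Sum>dd\<in>Poly_Mapping.keys (u j). Poly_Mapping.single dd (Poly_Mapping.lookup (u j) dd)))"
          by (simp add: sum_distrib_left)
        also have "\<dots> = (\<Sum>j<beta i. cnst (lam i k j) * u j)"
          by (simp flip: pm_sum_single)
        finally show ?thesis using True by (simp add: dstar_def mat_app_def)
      next
        case False
        then have "\<And>j dd k0. k0 < beta (i - 1) \<Longrightarrow> tm j dd k0 k = 0" by (auto simp: tm_def)
        then show ?thesis using False by (simp add: dstar_def mat_app_def)
      qed
    qed
    have mem: "(\<lambda>k. tm j dd k0 k) \<in> module_gen T G"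
      if j: "j < beta i" and dd: "dd \<in> Poly_Mapping.keys (u j)" and k0: "k0 < beta (i - 1)" for j dd k0
    proof (cases "lam i k0 j = 0")
      case True
      then have "(\<lambda>k. tm j dd k0 k) = (\<lambda>_. 0)" by (simp add: tm_def fun_eq_iff cnst_def)
      then show ?thesis by (simp add: MG_zero)
    next
      case False
      have uj: "u j \<in> Lstar T Lg beta lam i j" using u j by (simp add: Fstar_def)
      obtain v where vT: "v \<in> Tvars mT" and dv: "1 \<le> Poly_Mapping.lookup dd v"
        and xin: "xmon (dd - Poly_Mapping.single v 1) \<in> Lstar T Lg beta lam (i - 1) k0"
        using core[OF i j k0 False uj dd] by blast
      define c where "c = (cnst (lam i k0 j * Poly_Mapping.lookup (u j) dd) :: ('v \<times> nat, 'k) mpoly)"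
      define vv where "vv = (\<lambda>k. if k = k0 then xmon (dd - Poly_Mapping.single v 1) else (0::('v \<times> nat, 'k) mpoly))"
      have z: "\<And>j'. 0 \<in> Lstar T Lg beta lam (i - 1) j'"
        by (rule Lstar_zero) (simp_all add: zero_Lg zero_polyring)
      have vvF: "vv \<in> Fstar T Lg beta lam (i - 1)"
        unfolding Fstar_def vv_def using xin k0 z by auto
      have gv: "var v \<in> ideal_gen T (var ` Tvars mT)"
        unfolding ideal_gen_def
        by (intro CollectI exI[of _ 1] exI[of _ "\<lambda>_. 1"] exI[of _ "\<lambda>_. var v"]) (use vT one_polyring in auto)
      have wG: "(\<lambda>k. var v * vv k) \<in> G" unfolding G_def
        by (intro CollectI exI[of _ "var v"] exI[of _ vv]) (use gv vvF in simp)
      have sv: "Poly_Mapping.single v 1 + (dd - Poly_Mapping.single v 1) = dd"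
      proof (rule poly_mapping_eqI)
        fix w show "Poly_Mapping.lookup (Poly_Mapping.single v 1 + (dd - Poly_Mapping.single v 1)) w = Poly_Mapping.lookup dd w"
          using dv by (cases "w = v") (simp_all add: lookup_add lookup_minus lookup_single)
      qed
      have xd: "xmon dd = (var v * xmon (dd - Poly_Mapping.single v 1) :: ('v \<times> nat, 'k) mpoly)"
        unfolding var_def xmon_add[symmetric] sv ..
      have "(\<lambda>k. tm j dd k0 k) = (\<lambda>k. c * (var v * vv k))"
      proof (rule ext)
        fix k show "tm j dd k0 k = c * (var v * vv k)"
        proof (cases "k = k0")
          case True
          have "tm j dd k0 k = cnst (lam i k0 j) * (cnst (Poly_Mapping.lookup (u j) dd) * xmon dd)"
            using True by (simp add: tm_def single_cnst_xmon)
          also have "\<dots> = cnst (lam i k0 j) * (cnst (Poly_Mapping.lookup (u j) dd) * (var v * xmon (dd - Poly_Mapping.single v 1)))"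
            by (simp only: xd)
          also have "\<dots> = c * (var v * vv k)"
            using True by (simp add: c_def vv_def cnst_mult[symmetric] mult.assoc)
          finally show ?thesis .
        next
          case False
          then show ?thesis by (simp add: tm_def vv_def)
        qed
      qed
      moreover have "(\<lambda>k. c * (var v * vv k)) \<in> module_gen T G"
        using MG_single[of c T "\<lambda>k. var v * vv k" G] wG by (simp add: c_def cnst_polyring)
      ultimately show ?thesis by simp
    qed
    have "(\<lambda>k. \<Sum>j<beta i. \<Sum>dd\<in>Poly_Mapping.keys (u j). \<Sum>k0<beta (i - 1). tm j dd k0 k) \<in> module_gen T G"
      by (intro MG_sum finite_lessThan finite_keys mem) auto
    then show "dstar beta lam i u \<in> module_gen T G" unfolding dec .
  qed
qed

end

theorem lemma2p4:
  fixes I :: "('v::finite, 'k::field) mpoly set"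
    and m :: nat and aj :: "nat \<Rightarrow> ('v \<Rightarrow>\<^sub>0 nat)"
    and beta :: "nat \<Rightarrow> nat" and a :: "nat \<Rightarrow> nat \<Rightarrow> ('v \<Rightarrow>\<^sub>0 nat)"
    and lam :: "nat \<Rightarrow> nat \<Rightarrow> nat \<Rightarrow> 'k" and p :: nat
    and mT :: "'v \<Rightarrow> nat"
    and LL :: "'v \<Rightarrow> nat \<Rightarrow> ('v \<times> nat, 'k) mpoly set"
  assumes monI: "monomial_ideal UNIV I"
    and I_proper: "I \<noteq> UNIV"
    and GI: "mingens I = xmon ` aj ` {..<m}"
    and aj_inj: "inj_on aj {..<m}"
    and res: "is_min_graded_res I beta a lam p"
    and beta1: "beta 1 = m"
    and a1: "\<forall>j<m. a 1 j = aj j"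
    and lam1: "\<forall>j<m. lam 1 0 j = 1"
    and LLmon: "\<forall>l. \<forall>j<m. monomial_ideal (polyring (Tlvars mT l)) (LL l (Poly_Mapping.lookup (aj j) l))"
    and LLlin: "\<forall>l. \<forall>j<m. has_linear_resolution (Tlvars mT l) (LL l (Poly_Mapping.lookup (aj j) l)) (Poly_Mapping.lookup (aj j) l)"
    and LLincl: "\<forall>l. \<forall>j<m. \<forall>k<m. Poly_Mapping.lookup (aj j) l \<ge> Poly_Mapping.lookup (aj k) l
                   \<longrightarrow> LL l (Poly_Mapping.lookup (aj j) l) \<subseteq> LL l (Poly_Mapping.lookup (aj k) l)"
  shows "\<forall>i>0. \<forall>u \<in> Fstar (polyring (Tvars mT))
             (\<lambda>j. ideal_gen (polyring (Tvars mT))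
                    {\<Prod>l\<in>UNIV. f l | f. \<forall>l. f l \<in> LL l (Poly_Mapping.lookup (aj j) l)})
             beta lam i.
           dstar beta lam i u \<in>
             module_gen (polyring (Tvars mT))
               {(\<lambda>k. g * v k) | g v. g \<in> ideal_gen (polyring (Tvars mT)) (var ` Tvars mT)
                   \<and> v \<in> Fstar (polyring (Tvars mT))
                          (\<lambda>j. ideal_gen (polyring (Tvars mT))
                                 {\<Prod>l\<in>UNIV. f l | f. \<forall>l. f l \<in> LL l (Poly_Mapping.lookup (aj j) l)})
                          beta lam (i - 1)}"
proof -
  interpret bigctx I beta a lam p m aj mT LL
    by unfold_locales (use res beta1 a1 monI I_proper GI LLmon LLlin LLincl in auto)
  show ?thesis by (rule main)
qed

end
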